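(* Let $\mathcal{T}$ be a projective Fraïssé family of finite graphs that allows splitting edges, and let $\mathbb{G}$ be its projective Fraïssé limit. Then $\mathbb{G}$ is a prespace, i.e. the edge relation of $\mathbb{G}$ is an equivalence relation.
   Context: A graph $G$ is a set of vertices $V(G)$ with an edge set $E(G)\subseteq V(G)^2$ that is reflexive ($\langle a,a\rangle\in E(G)$ for all $a$) and symmetric. A topological graph is a graph with a compact, Hausdorff, zero-dimensional, second countable topology on $V(G)$ such that $E(G)$ is closed in $V(G)^2$; finite graphs carry the discrete topology. An epimorphism $g\colon B\to A$ of topological graphs is a continuous surjection such that for all $a_1,a_2\in A$: $\langle a_1,a_2\rangle\in E(A)$ iff there are $b_1\in g^{-1}(a_1)$, $b_2\in g^{-1}(a_2)$ with $\langle b_1,b_2\rangle\in E(B)$. A projective Fraïssé family is a class $\mathcal{F}$ of finite graphs together with a distinguished class of epimorphisms between them such that: there are countably many members up to isomorphism; the distinguished epimorphisms contain the identities and are closed under composition; (joint projection) for all $A,B\in\mathcal{F}$ there is $C\in\mathcal{F}$ with distinguished epimorphisms $C\to A$, $C\to B$; (projective amalgamation) for all distinguished $f\colon B\to A$, $g\colon C\to A$ there are $D\in\mathcal{F}$ and distinguished $h\colon D\to B$, $k\colon D\to C$ with $f\circ h=g\circ k$. A Fraïssé sequence for $\mathcal{F}$ is a sequence $(F_n)_{n<\omega}$ in $\mathcal{F}$ with distinguished epimorphisms $f^m_n\colon F_m\to F_n$ ($m\ge n$, compatible under composition) such that every $A\in\mathcal F$ admits a distinguished epimorphism $F_n\to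 A$ for some $n$, and for every distinguished epimorphism $f\colon A\to F_m$ there are $n\ge m$ and a distinguished $g\colon F_n\to A$ with $f\circ g=f^n_m$. Fraïssé sequences exist, and the projective Fraïssé limit $\mathbb{G}$ of $\mathcal{F}$ is (up to isomorphism) the inverse limit $\varprojlim F_n\subseteq\prod_n F_n$ with the product topology, where $\langle x,y\rangle\in E(\mathbb{G})$ iff $\langle x_n,y_n\rangle\in E(F_n)$ for all $n$. The family $\mathcal{T}$ allows splitting edges if for every $G\in\mathcal{T}$ and distinct $a,b\in V(G)$ with $\langle a,b\rangle\in E(G)$, the graph $H$ with $V(H)=V(G)\sqcup\{\ast\}$ whose nontrivial edges are those of $G$ except $\{a,b\}$, together with $\{a,\ast\}$ and $\{\ast,b\}$, belongs to $\mathcal{T}$, and the two maps $H\to G$ sending $\ast$ to $a$ (respectively to $b$) and fixing all other vertices are distinguished epimorphisms of $\mathcal{T}$. *)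

theory Defs
  imports Main
begin

text \<open>A graph is a pair (V, E): a vertex set and a reflexive, symmetric edge relation on it.
  Finite graphs carry the discrete topology, so no topology is needed for members of the family.\<close>

type_synonym 'a graph = "'a set \<times> ('a \<times> 'a) set"

definition verts :: "'a graph \<Rightarrow> 'a set" where "verts G = fst G"
definition edges :: "'a graph \<Rightarrow> ('a \<times> 'a) set" where "edges G = snd G"

definition finite_graph :: "'a graph \<Rightarrow> bool" where
  "finite_graph G \<longleftrightarrow> finite (verts G) \<and> edges G \<subseteq> verts G \<times> verts G
     \<and> (\<forall>a\<in>verts G. (a, a) \<in> edges G)
     \<and> (\<forall>a b. (a, b) \<in> edges G \<longrightarrow> (b, a) \<in> edges G)"

text \<open>Epimorphism g : B \<rightarrow> A of finite graphs (continuity is automatic for discrete spaces).\<close>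
definition epimorphism :: "('a \<Rightarrow> 'a) \<Rightarrow> 'a graph \<Rightarrow> 'a graph \<Rightarrow> bool" where
  "epimorphism g B A \<longleftrightarrow> g ` verts B = verts A
     \<and> (\<forall>a1\<in>verts A. \<forall>a2\<in>verts A. (a1, a2) \<in> edges A \<longleftrightarrow>
          (\<exists>b1\<in>verts B. \<exists>b2\<in>verts B. g b1 = a1 \<and> g b2 = a2 \<and> (b1, b2) \<in> edges B))"

text \<open>A projective Fraisse family: a class T of finite graphs with a distinguished class of
  epimorphisms, D B A f meaning "f : B \<rightarrow> A is distinguished". Maps are compared on the
  vertex set of their domain.\<close>
definition proj_fraisse_family ::
  "'a graph set \<Rightarrow> ('a graph \<Rightarrow> 'a graph \<Rightarrow> ('a \<Rightarrow> 'a) \<Rightarrow> bool) \<Rightarrow> bool" where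
  "proj_fraisse_family T D \<longleftrightarrow>
     (\<forall>G\<in>T. finite_graph G)
   \<and> (\<forall>B A f. D B A f \<longrightarrow> B \<in> T \<and> A \<in> T \<and> epimorphism f B A)
   \<and> (\<forall>A\<in>T. D A A id)
   \<and> (\<forall>C B A g f. D C B g \<longrightarrow> D B A f \<longrightarrow> D C A (f \<circ> g))
   \<and> (\<forall>A\<in>T. \<forall>B\<in>T. \<exists>C\<in>T. (\<exists>f. D C A f) \<and> (\<exists>g. D C B g))
   \<and> (\<forall>A B C f g. D B A f \<longrightarrow> D C A g \<longrightarrow>
        (\<exists>E\<in>T. \<exists>h k. D E B h \<and> D E C k \<and> (\<forall>x\<in>verts E. f (h x) = g (k x))))"

definition split_edge :: "'a graph \<Rightarrow> 'a \<Rightarrow> 'a \<Rightarrow> 'a \<Rightarrow> 'a graph" where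
  "split_edge G a b s =
     (insert s (verts G),
      (edges G - {(a, b), (b, a)}) \<union> {(a, s), (s, a), (s, b), (b, s), (s, s)})"

definition allows_splitting_edges ::
  "'a graph set \<Rightarrow> ('a graph \<Rightarrow> 'a graph \<Rightarrow> ('a \<Rightarrow> 'a) \<Rightarrow> bool) \<Rightarrow> bool" where
  "allows_splitting_edges T D \<longleftrightarrow>
     (\<forall>G\<in>T. \<forall>a\<in>verts G. \<forall>b\<in>verts G. a \<noteq> b \<longrightarrow> (a, b) \<in> edges G \<longrightarrow>
        (\<exists>s. s \<notin> verts G \<and> split_edge G a b s \<in> T
           \<and> D (split_edge G a b s) G (\<lambda>v. if v = s then a else v)
           \<and> D (split_edge G a b s) G (\<lambda>v. if v = s then b else v)))"

definition fraisse_sequence ::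
  "'a graph set \<Rightarrow> ('a graph \<Rightarrow> 'a graph \<Rightarrow> ('a \<Rightarrow> 'a) \<Rightarrow> bool)
   \<Rightarrow> (nat \<Rightarrow> 'a graph) \<Rightarrow> (nat \<Rightarrow> nat \<Rightarrow> 'a \<Rightarrow> 'a) \<Rightarrow> bool" where
  "fraisse_sequence T D F fs \<longleftrightarrow>
     (\<forall>n. F n \<in> T)
   \<and> (\<forall>m n. n \<le> m \<longrightarrow> D (F m) (F n) (fs m n))
   \<and> (\<forall>m n k. k \<le> n \<longrightarrow> n \<le> m \<longrightarrow> (\<forall>x\<in>verts (F m). fs n k (fs m n x) = fs m k x))
   \<and> (\<forall>A\<in>T. \<exists>n f. D (F n) A f)
   \<and> (\<forall>A m f. D A (F m) f \<longrightarrow>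
        (\<exists>n\<ge>m. \<exists>g. D (F n) A g \<and> (\<forall>x\<in>verts (F n). f (g x) = fs n m x)))"

definition lim_verts :: "(nat \<Rightarrow> 'a graph) \<Rightarrow> (nat \<Rightarrow> nat \<Rightarrow> 'a \<Rightarrow> 'a) \<Rightarrow> (nat \<Rightarrow> 'a) set" where
  "lim_verts F fs = {x. (\<forall>n. x n \<in> verts (F n)) \<and> (\<forall>m n. n \<le> m \<longrightarrow> fs m n (x m) = x n)}"

definition lim_edges :: "(nat \<Rightarrow> 'a graph) \<Rightarrow> (nat \<Rightarrow> nat \<Rightarrow> 'a \<Rightarrow> 'a) \<Rightarrow> ((nat \<Rightarrow> 'a) \<times> (nat \<Rightarrow> 'a)) set" where
  "lim_edges F fs = {(x, y). x \<in> lim_verts F fs \<and> y \<in> lim_verts F fs \<and> (\<forall>n. (x n, y n) \<in> edges (F n))}"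

end

theory Submission
  imports Defs
begin

theorem mainTheorem1:
  fixes T :: "'a graph set"
    and D :: "'a graph \<Rightarrow> 'a graph \<Rightarrow> ('a \<Rightarrow> 'a) \<Rightarrow> bool"
    and F :: "nat \<Rightarrow> 'a graph"
    and fs :: "nat \<Rightarrow> nat \<Rightarrow> 'a \<Rightarrow> 'a"
  assumes "proj_fraisse_family T D"
    and "allows_splitting_edges T D"
    and "fraisse_sequence T D F fs"
  shows "equiv (lim_verts F fs) (lim_edges F fs)"
proof -
  note fsd = assms(3)[unfolded fraisse_sequence_def]
  note pfd = assms(1)[unfolded proj_fraisse_family_def]
  have FT: "\<And>n. F n \<in> T" using fsd[THEN conjunct1] by blast
  have fg: "\<And>n. finite_graph (F n)" using pfd[THEN conjunct1] FT by blast
  have ext: "\<And>A m f. D A (F m) f \<Longrightarrow>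
        (\<exists>n\<ge>m. \<exists>g. D (F n) A g \<and> (\<forall>x\<in>verts (F n). f (g x) = fs n m x))"
    using fsd[THEN conjunct2, THEN conjunct2, THEN conjunct2, THEN conjunct2] by blast
  have epi: "\<And>B A f. D B A f \<Longrightarrow> epimorphism f B A"
    using pfd[THEN conjunct2, THEN conjunct1] by blast
  have refl: "refl_on (lim_verts F fs) (lim_edges F fs)"
    unfolding refl_on_def lim_edges_def using fg unfolding finite_graph_def lim_verts_def by auto
  have sym: "sym (lim_edges F fs)"
    unfolding sym_def lim_edges_def using fg unfolding finite_graph_def by blast
  have trans: "trans (lim_edges F fs)"
  proof (rule transI)
    fix x y z assume xy: "(x, y) \<in> lim_edges F fs" and yz: "(y, z) \<in> lim_edges F fs"
    have xv: "x \<in> lim_verts F fs" and yv: "y \<in> lim_verts F fs" and zv: "z \<in> lim_verts F fs"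
      using xy yz unfolding lim_edges_def by auto
    have exy: "\<And>n. (x n, y n) \<in> edges (F n)" and eyz: "\<And>n. (y n, z n) \<in> edges (F n)"
      using xy yz unfolding lim_edges_def by auto
    have "(x n, z n) \<in> edges (F n)" for n
    proof (rule ccontr)
      assume nxz: "(x n, z n) \<notin> edges (F n)"
      let ?G = "F n"
      have vx: "x n \<in> verts ?G" and vy: "y n \<in> verts ?G" and vz: "z n \<in> verts ?G"
        using xv yv zv unfolding lim_verts_def by auto
      have G: "finite_graph ?G" by (rule fg)
      have ne1: "x n \<noteq> y n" using nxz eyz[of n] by auto
      have ne2: "y n \<noteq> z n" using nxz exy[of n] by auto
      have ne3: "x n \<noteq> z n" using nxz G vx unfolding finite_graph_def by auto
      have eyx: "(y n, x n) \<in> edges ?G" using exy[of n] G unfolding finite_graph_def by blast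
      obtain s where s: "s \<notin> verts ?G" and
        D1: "D (split_edge ?G (y n) (x n) s) ?G (\<lambda>v. if v = s then y n else v)"
      proof -
        have "\<forall>G\<in>T. \<forall>a\<in>verts G. \<forall>b\<in>verts G. a \<noteq> b \<longrightarrow> (a, b) \<in> edges G \<longrightarrow>
        (\<exists>s. s \<notin> verts G \<and> split_edge G a b s \<in> T
           \<and> D (split_edge G a b s) G (\<lambda>v. if v = s then a else v)
           \<and> D (split_edge G a b s) G (\<lambda>v. if v = s then b else v))"
          using assms(2) unfolding allows_splitting_edges_def .
        then have "\<exists>s. s \<notin> verts ?G \<and> split_edge ?G (y n) (x n) s \<in> T
           \<and> D (split_edge ?G (y n) (x n) s) ?G (\<lambda>v. if v = s then y n else v)
           \<and> D (split_edge ?G (y n) (x n) s) ?G (\<lambda>v. if v = s then x n else v)"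
        proof -
          have ne1': "y n \<noteq> x n" using ne1 by simp
          note h = \<open>\<forall>G\<in>T. _\<close>
          show ?thesis using h[rule_format, OF FT[of n] vy vx ne1' eyx] .
        qed
        then show ?thesis using that by blast
      qed
      let ?H = "split_edge ?G (y n) (x n) s"
      let ?f = "\<lambda>v. if v = s then y n else v"
      obtain m g where mn: "m \<ge> n" and Dg: "D (F m) ?H g"
        and comm: "\<forall>w\<in>verts (F m). ?f (g w) = fs m n w"
        using ext[OF D1] by blast
      have eg: "epimorphism g (F m) ?H" using epi[OF Dg] .
      have xm: "x m \<in> verts (F m)" and ym: "y m \<in> verts (F m)" and zm: "z m \<in> verts (F m)"
        using xv yv zv unfolding lim_verts_def by auto
      have fx: "fs m n (x m) = x n" and fy: "fs m n (y m) = y n" and fz: "fs m n (z m) = z n"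
        using xv yv zv mn unfolding lim_verts_def by auto
      have pres: "\<And>b1 b2. b1 \<in> verts (F m) \<Longrightarrow> b2 \<in> verts (F m) \<Longrightarrow> (b1, b2) \<in> edges (F m)
          \<Longrightarrow> (g b1, g b2) \<in> edges ?H"
      proof -
        fix b1 b2 assume b: "b1 \<in> verts (F m)" "b2 \<in> verts (F m)" "(b1, b2) \<in> edges (F m)"
        have "g b1 \<in> verts ?H" "g b2 \<in> verts ?H" using eg b unfolding epimorphism_def by auto
        then show "(g b1, g b2) \<in> edges ?H" using eg b unfolding epimorphism_def by blast
      qed
      have gx: "g (x m) = x n"
        using comm[rule_format, OF xm] fx ne1 by (auto split: if_splits)
      have gz: "g (z m) = z n"
        using comm[rule_format, OF zm] fz ne2 by (auto split: if_splits)
      have e1: "(x n, g (y m)) \<in> edges ?H" using pres[OF xm ym exy[of m]] gx by simp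
      have e2: "(g (y m), z n) \<in> edges ?H" using pres[OF ym zm eyz[of m]] gz by simp
      have gy: "g (y m) = s \<or> g (y m) = y n"
        using comm[rule_format, OF ym] fy by (auto split: if_splits)
      have sx: "s \<noteq> x n" "s \<noteq> y n" "s \<noteq> z n" using s vx vy vz by auto
      have EG: "edges ?G \<subseteq> verts ?G \<times> verts ?G" using G unfolding finite_graph_def by blast
      show False
      proof (cases "g (y m) = s")
        case True
        then have "(s, z n) \<in> edges ?H" using e2 by simp
        then show False using sx s EG ne2 ne3 unfolding split_edge_def edges_def by auto
      next
        case False
        then have "(x n, y n) \<in> edges ?H" using e1 gy by simp
        then show False using sx unfolding split_edge_def edges_def by auto
      qed
    qed
    then show "(x, z) \<in> lim_edges F fs" using xv zv unfolding lim_edges_def by auto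
  qed
  have sub: "lim_edges F fs \<subseteq> lim_verts F fs \<times> lim_verts F fs"
    unfolding lim_edges_def by auto
  show ?thesis unfolding equiv_def using sub refl sym trans by blast
qed

end
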